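(* For $\theta\in(-\pi,\pi]$ let $U(\theta)=R\sigma^+R^\dagger$ with $R=e^{-i\theta\sigma^y/2}$ (so $U(\theta)$ annihilates the pure state with Bloch vector $(\sin\theta,0,\cos\theta)$), and for a probability density $p$ on $(-\pi,\pi]$ consider the qubit Lindblad equation $\partial_t\rho=\int p(\theta)\,\mathcal D(U(\theta))\rho\,d\theta$, with stationary state $\rho_\oplus$ and fidelity $F_\infty=\langle\uparrow|\rho_\oplus|\uparrow\rangle$ with $|\uparrow\rangle$. (i) If $p$ is uniform on $[-\tilde\theta,\tilde\theta]$ with $0<\tilde\theta\le\pi$, then $F_\infty=\tfrac12+\tfrac{4\sin\tilde\theta}{6\tilde\theta+\sin2\tilde\theta}=1-\tfrac{\tilde\theta^4}{80}+O(\tilde\theta^6)$ as $\tilde\theta\to0$. (ii) If $p(\theta)=\frac{e^{\sigma^{-2}\cos\theta}}{2\pi I_0(\sigma^{-2})}$ (von Mises) with $\sigma>0$, then $F_\infty=\tfrac12+\Big(\tfrac{2I_0(\sigma^{-2})}{I_1(\sigma^{-2})}-\sigma^2\Big)^{-1}=1-\tfrac{3}{16}\sigma^4+O(\sigma^6)$ as $\sigma\to0$. In both cases the off-diagonal entry of $\rho_\oplus$ in the basis $\{|\uparrow\rangle,|\downarrow\rangle\}$ vanishes.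
   Context: $\sigma^+=|\uparrow\rangle\langle\downarrow|$; $\mathcal D(L)\rho:=L\rho L^\dagger-\tfrac12\{L^\dagger L,\rho\}$; $I_\nu$ denotes the modified Bessel function of the first kind of order $\nu$. *)

theory Defs
  imports "HOL-Analysis.Analysis" "HOL-Library.Landau_Symbols"
begin

text \<open>Qubit operators as 2x2 complex matrices; index 1 = up, index 2 = down.\<close>

type_synonym qop = "complex^2^2"

definition adj :: "qop \<Rightarrow> qop" where
  "adj A = (\<chi> i j. cnj (A $ j $ i))"

definition sigma_plus :: qop where
  "sigma_plus = (\<chi> i j. if i = 1 \<and> j = 2 then 1 else 0)"

definition sigma_y :: qop where
  "sigma_y = (\<chi> i j. if i = 1 \<and> j = 2 then - \<i> else if i = 2 \<and> j = 1 then \<i> else 0)"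

text \<open>R(theta) = exp(-i theta sigma_y / 2) = cos(theta/2) Id - i sin(theta/2) sigma_y
  (since sigma_y squared is the identity).\<close>
definition Rot :: "real \<Rightarrow> qop" where
  "Rot \<theta> = (\<chi> i j. complex_of_real (cos (\<theta>/2)) * (mat 1 :: qop) $ i $ j
                   + (- \<i> * complex_of_real (sin (\<theta>/2))) * sigma_y $ i $ j)"

definition Uop :: "real \<Rightarrow> qop" where
  "Uop \<theta> = Rot \<theta> ** sigma_plus ** adj (Rot \<theta>)"

definition dissipator :: "qop \<Rightarrow> qop \<Rightarrow> qop" where
  "dissipator L \<rho> = L ** \<rho> ** adj L - (1/2::real) *\<^sub>R (adj L ** L ** \<rho> + \<rho> ** adj L ** L)"

definition lindblad :: "(real \<Rightarrow> real) \<Rightarrow> qop \<Rightarrow> qop" where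
  "lindblad p \<rho> = integral {-pi..pi} (\<lambda>\<theta>. p \<theta> *\<^sub>R dissipator (Uop \<theta>) \<rho>)"

definition density_matrix :: "qop \<Rightarrow> bool" where
  "density_matrix \<rho> \<longleftrightarrow> adj \<rho> = \<rho>
     \<and> (\<forall>v::complex^2. 0 \<le> Re (\<Sum>i\<in>UNIV. cnj (v $ i) * (\<rho> *v v) $ i))
     \<and> \<rho> $ 1 $ 1 + \<rho> $ 2 $ 2 = 1"

definition stationary_state :: "(real \<Rightarrow> real) \<Rightarrow> qop \<Rightarrow> bool" where
  "stationary_state p \<rho> \<longleftrightarrow> density_matrix \<rho> \<and> lindblad p \<rho> = 0"

definition bessel_I :: "nat \<Rightarrow> real \<Rightarrow> real" where
  "bessel_I n x = (\<Sum>k. (x/2) ^ (2*k+n) / (fact k * fact (k+n)))"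

definition uniform_density :: "real \<Rightarrow> real \<Rightarrow> real" where
  "uniform_density t \<theta> = (if -t \<le> \<theta> \<and> \<theta> \<le> t then 1 / (2*t) else 0)"

definition von_mises_density :: "real \<Rightarrow> real \<Rightarrow> real" where
  "von_mises_density s \<theta> = exp (cos \<theta> / s^2) / (2*pi * bessel_I 0 (1 / s^2))"

end

theory Submission
  imports Defs "HOL-Real_Asymp.Real_Asymp"
begin


lemma vec2_eq: fixes A B :: qop
  shows "A = B \<longleftrightarrow> A$1$1 = B$1$1 \<and> A$1$2 = B$1$2 \<and> A$2$1 = B$2$1 \<and> A$2$2 = B$2$2"
  by (auto simp: vec_eq_iff forall_2)

lemma mult2: fixes A B :: qop shows
  "(A ** B) $ i $ j = A$i$1 * B$1$j + A$i$2 * B$2$j"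
  by (simp add: matrix_matrix_mult_def sum_2)

definition cU :: "real \<Rightarrow> real \<Rightarrow> qop" where
  "cU c s = (\<chi> i j. complex_of_real (if i = 1 then (if j = 1 then - (c * s) else c^2) else (if j = 1 then - (s^2) else c * s)))"

lemma Uop_eq: "Uop \<theta> = cU (cos (\<theta>/2)) (sin (\<theta>/2))"
  unfolding vec2_eq
  by (simp add: Uop_def cU_def mult2 Rot_def adj_def sigma_plus_def sigma_y_def mat_def power2_eq_square algebra_simps)


definition mk :: "complex \<Rightarrow> complex \<Rightarrow> complex \<Rightarrow> complex \<Rightarrow> qop" where
  "mk a b c d = (\<chi> i j. if i = 1 then (if j = 1 then a else b) else (if j = 1 then c else d))"

lemma mk_simps[simp]: "mk a b c d $ 1 $ 1 = a" "mk a b c d $ 1 $ 2 = b" "mk a b c d $ 2 $ 1 = c" "mk a b c d $ 2 $ 2 = d"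
  by (simp_all add: mk_def)

lemma cscale: "x *\<^sub>R (z::complex) = complex_of_real x * z"
  by (simp add: scaleR_conv_of_real)

definition M0 :: "qop \<Rightarrow> qop" where "M0 r = mk ((r$2$2 - r$1$1)/4) (-(r$1$2+r$2$1)/4 - r$1$2/2) (-(r$1$2+r$2$1)/4 - r$2$1/2) ((r$1$1 - r$2$2)/4)"
definition M1 :: "qop \<Rightarrow> qop" where "M1 r = mk ((r$1$1+r$2$2)/2) 0 0 (-(r$1$1+r$2$2)/2)"
definition M2 :: "qop \<Rightarrow> qop" where "M2 r = mk 0 ((r$1$1+r$2$2)/2) ((r$1$1+r$2$2)/2) 0"
definition M3 :: "qop \<Rightarrow> qop" where "M3 r = mk ((r$2$2 - r$1$1)/4) ((r$1$2+r$2$1)/4) ((r$1$2+r$2$1)/4) ((r$1$1 - r$2$2)/4)"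
definition M4 :: "qop \<Rightarrow> qop" where "M4 r = mk (-(r$1$2+r$2$1)/4) ((r$2$2 - r$1$1)/4) ((r$2$2 - r$1$1)/4) ((r$1$2+r$2$1)/4)"

lemma diss_cU:
  assumes cs: "c^2 + s^2 = (1::real)"
  shows "dissipator (cU c s) r = M0 r + (c^2-s^2) *\<^sub>R M1 r + (2*c * s) *\<^sub>R M2 r
     + ((c^2-s^2)^2) *\<^sub>R M3 r + (2*c * s*(c^2-s^2)) *\<^sub>R M4 r"
proof -
  define C where "C = complex_of_real c"
  define S where "S = complex_of_real s"
  have h: "C^2 + S^2 = 1" unfolding C_def S_def using cs
    by (metis of_real_1 of_real_add of_real_power)
  define a where "a = r$1$1"
  define b where "b = r$1$2"
  define e where "e = r$2$1"
  define d where "d = r$2$2"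
  show ?thesis unfolding vec2_eq
    apply (intro conjI)
    apply (simp_all add: dissipator_def cU_def mult2 adj_def M0_def M1_def M2_def M3_def M4_def cscale
      flip: C_def S_def a_def b_def e_def d_def)
    apply (simp_all add: field_simps)
    apply (insert h; algebra)+
    done
qed

lemma diss_U: "dissipator (Uop \<theta>) r = M0 r + cos \<theta> *\<^sub>R M1 r + sin \<theta> *\<^sub>R M2 r
     + (cos \<theta>)^2 *\<^sub>R M3 r + (sin \<theta> * cos \<theta>) *\<^sub>R M4 r"
proof -
  have c: "cos \<theta> = (cos (\<theta>/2))^2 - (sin (\<theta>/2))^2" using cos_double[of "\<theta>/2"] by simp
  have s: "sin \<theta> = 2 * cos (\<theta>/2) * sin (\<theta>/2)" using sin_double[of "\<theta>/2"] by (simp add: mult_ac)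
  show ?thesis unfolding Uop_eq c s by (rule diss_cU) simp
qed

lemma lindblad_moments:
  assumes p0: "(p has_integral A0) {-pi..pi}"
    and p1: "((\<lambda>\<theta>. p \<theta> * cos \<theta>) has_integral A1) {-pi..pi}"
    and p2: "((\<lambda>\<theta>. p \<theta> * sin \<theta>) has_integral B1) {-pi..pi}"
    and p3: "((\<lambda>\<theta>. p \<theta> * (cos \<theta>)^2) has_integral A2) {-pi..pi}"
    and p4: "((\<lambda>\<theta>. p \<theta> * (sin \<theta> * cos \<theta>)) has_integral B2) {-pi..pi}"
  shows "lindblad p r = A0 *\<^sub>R M0 r + A1 *\<^sub>R M1 r + B1 *\<^sub>R M2 r + A2 *\<^sub>R M3 r + B2 *\<^sub>R M4 r"
proof -
  have eq: "(\<lambda>\<theta>. p \<theta> *\<^sub>R dissipator (Uop \<theta>) r) = (\<lambda>\<theta>. p \<theta> *\<^sub>R M0 r + (p \<theta> * cos \<theta>) *\<^sub>R M1 r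
     + (p \<theta> * sin \<theta>) *\<^sub>R M2 r + (p \<theta> * (cos \<theta>)^2) *\<^sub>R M3 r + (p \<theta> * (sin \<theta> * cos \<theta>)) *\<^sub>R M4 r)"
    by (rule ext) (simp add: diss_U scaleR_add_right)
  have "((\<lambda>\<theta>. p \<theta> *\<^sub>R dissipator (Uop \<theta>) r) has_integral
      (A0 *\<^sub>R M0 r + A1 *\<^sub>R M1 r + B1 *\<^sub>R M2 r + A2 *\<^sub>R M3 r + B2 *\<^sub>R M4 r)) {-pi..pi}"
    unfolding eq
    by (intro has_integral_add has_integral_scaleR_left p0 p1 p2 p3 p4)
  then show ?thesis unfolding lindblad_def by (rule integral_unique)
qed

lemma lin_aux1: fixes x y B E :: complex
  assumes "x * (-(B+E)/4 - B/2) + y * ((B+E)/4) = 0" "x * (-(B+E)/4 - E/2) + y * ((B+E)/4) = 0"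
  shows "(y - 2 * x) * (B + E) = 0"
proof -
  have "(y - 2 * x) * (B + E) = 2 * ((x * (-(B+E)/4 - B/2) + y * ((B+E)/4)) + (x * (-(B+E)/4 - E/2) + y * ((B+E)/4)))"
    by (simp add: field_simps)
  also have "\<dots> = 2 * (0 + 0)" by (simp only: assms)
  finally show ?thesis by simp
qed

lemma lin_aux2: fixes x y z a :: complex
  assumes "x * ((1 - a - a)/4) + z * ((a + (1 - a))/2) + y * ((1 - a - a)/4) = 0"
  shows "(x + y) * (1 - 2*a) = - 2 * z"
proof -
  have "(x + y) * (1 - 2*a) + 2 * z = 4 * (x * ((1 - a - a)/4) + z * ((a + (1 - a))/2) + y * ((1 - a - a)/4))"
    by (simp add: field_simps)
  also have "\<dots> = 4 * 0" by (simp only: assms)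
  finally have "(x + y) * (1 - 2*a) + 2 * z = 0" by simp
  then show ?thesis by (simp add: eq_neg_iff_add_eq_0)
qed

lemma stationary_char:
  assumes p0: "(p has_integral A0) {-pi..pi}"
    and p1: "((\<lambda>\<theta>. p \<theta> * cos \<theta>) has_integral A1) {-pi..pi}"
    and p2: "((\<lambda>\<theta>. p \<theta> * sin \<theta>) has_integral 0) {-pi..pi}"
    and p3: "((\<lambda>\<theta>. p \<theta> * (cos \<theta>)^2) has_integral A2) {-pi..pi}"
    and p4: "((\<lambda>\<theta>. p \<theta> * (sin \<theta> * cos \<theta>)) has_integral 0) {-pi..pi}"
    and pos: "0 < A0" "A2 \<le> A0" "0 \<le> A2" "\<bar>2*A1\<bar> \<le> A0 + A2"
  shows "(\<exists>\<rho>. stationary_state p \<rho>) \<and>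
      (\<forall>\<rho>. stationary_state p \<rho> \<longrightarrow> \<rho> $ 1 $ 1 = complex_of_real (1/2 + A1/(A0+A2))
         \<and> \<rho> $ 1 $ 2 = 0 \<and> \<rho> $ 2 $ 1 = 0)"
proof -
  have L: "lindblad p r = A0 *\<^sub>R M0 r + A1 *\<^sub>R M1 r + A2 *\<^sub>R M3 r" for r
    using lindblad_moments[OF p0 p1 p2 p3 p4, of r] by simp
  have S: "A0 + A2 > 0" using pos by linarith
  define f where "f = 1/2 + A1/(A0+A2)"
  have f01: "0 \<le> f" "f \<le> 1"
  proof -
    have a1: "-(A0+A2) \<le> 2*A1" "2*A1 \<le> A0+A2" using pos(4) by (simp_all add: abs_le_iff)
    have fq: "f = (A0+A2+2*A1)/(2*(A0+A2))" unfolding f_def using S by (simp add: field_simps)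
    show "0 \<le> f" unfolding fq using a1 S by (intro divide_nonneg_pos) simp_all
    show "f \<le> 1" unfolding fq using a1 S by (simp add: divide_le_eq_1)
  qed
  have fe: "(A0 + A2) * (1 - 2*f) = - 2 * A1" unfolding f_def using S by (simp add: field_simps)
  have ex: "stationary_state p (mk (of_real f) 0 0 (of_real (1-f)))"
  proof -
    have "Re (cnj z * (complex_of_real g * z)) = g * (cmod z)^2" for z g
    proof -
      have "cnj z * (complex_of_real g * z) = complex_of_real g * (z * cnj z)" by (simp add: mult_ac)
      also have "\<dots> = complex_of_real (g * (cmod z)^2)" by (simp only: complex_norm_square of_real_mult)
      finally show ?thesis by (simp only: Re_complex_of_real)
    qed
    moreover have "0 \<le> f * (cmod z)^2" "0 \<le> (1-f) * (cmod z)^2" for z using f01 by simp_all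
    ultimately have "0 \<le> Re (\<Sum>i\<in>UNIV. cnj (v $ i) * (mk (of_real f) 0 0 (of_real (1-f)) *v v) $ i)" for v :: "complex^2"
      by (simp add: sum_2 matrix_vector_mult_def)
    moreover have "adj (mk (of_real f) 0 0 (of_real (1-f))) = mk (of_real f) 0 0 (of_real (1-f))"
      unfolding vec2_eq by (simp add: adj_def)
    moreover have "lindblad p (mk (of_real f) 0 0 (of_real (1-f))) = 0"
    proof -
      have R: "A0 * ((1 - f - f)/4) + A1 * ((f + (1 - f))/2) + A2 * ((1 - f - f)/4) = 0"
        using fe by (simp add: field_simps)
      have C: "complex_of_real A0 * ((complex_of_real (1 - f) - complex_of_real f)/4)
          + complex_of_real A1 * ((complex_of_real f + complex_of_real (1 - f))/2)
          + complex_of_real A2 * ((complex_of_real (1 - f) - complex_of_real f)/4) = 0"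
        using arg_cong[OF R, of complex_of_real] by simp
      have C2: "complex_of_real A0 * ((complex_of_real f - complex_of_real (1 - f))/4)
          + complex_of_real A1 * (- (complex_of_real f + complex_of_real (1 - f))/2)
          + complex_of_real A2 * ((complex_of_real f - complex_of_real (1 - f))/4) = 0"
      proof -
        have R2: "A0 * ((f - (1 - f))/4) + A1 * (- (f + (1 - f))/2) + A2 * ((f - (1 - f))/4) = 0"
          using fe by (simp add: field_simps)
        show ?thesis using arg_cong[OF R2, of complex_of_real] by simp
      qed
      show ?thesis unfolding L vec2_eq
        using C C2 by (simp add: M0_def M1_def M3_def cscale)
    qed
    ultimately show ?thesis unfolding stationary_state_def density_matrix_def by simp
  qed
  moreover have "\<rho> $ 1 $ 1 = complex_of_real f \<and> \<rho> $ 1 $ 2 = 0 \<and> \<rho> $ 2 $ 1 = 0"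
    if st: "stationary_state p \<rho>" for \<rho>
  proof -
    define a where "a = \<rho>$1$1"
    define b where "b = \<rho>$1$2"
    define e where "e = \<rho>$2$1"
    define d where "d = \<rho>$2$2"
    have tr: "a + d = 1" using st unfolding stationary_state_def density_matrix_def a_def d_def by simp
    have "lindblad p \<rho> = 0" using st unfolding stationary_state_def by simp
    then have E: "of_real A0 * ((d - a)/4) + of_real A1 * ((a+d)/2) + of_real A2 * ((d-a)/4) = 0"
       "of_real A0 * (-(b+e)/4 - b/2) + of_real A2 * ((b+e)/4) = 0"
       "of_real A0 * (-(b+e)/4 - e/2) + of_real A2 * ((b+e)/4) = 0"
      unfolding L vec2_eq by (simp_all add: M0_def M1_def M3_def cscale flip: a_def b_def e_def d_def)
    have "(complex_of_real A2 - 2 * of_real A0) * (b + e) = 0" using lin_aux1[OF E(2) E(3)] .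
    moreover have "complex_of_real A2 - 2 * of_real A0 \<noteq> 0"
    proof
      assume "complex_of_real A2 - 2 * of_real A0 = 0"
      then have "complex_of_real (A2 - 2 * A0) = 0" by simp
      then have "A2 - 2*A0 = 0" by (simp only: of_real_eq_0_iff)
      then show False using pos by linarith
    qed
    ultimately have be: "b + e = 0" by simp
    with E(2) have "of_real A0 * b = 0" by (simp add: field_simps)
    then have b0: "b = 0" using pos by simp
    with be have e0: "e = 0" by simp
    have dd: "d = 1 - a" using tr by (simp add: algebra_simps)
    have "complex_of_real (A0 + A2) * (1 - 2*a) = - 2 * of_real A1"
      using lin_aux2[of "of_real A0" a "of_real A1" "of_real A2"] E(1) unfolding dd by simp
    moreover have "complex_of_real (A0 + A2) * (1 - 2 * of_real f) = - 2 * of_real A1"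
      using arg_cong[OF fe, of complex_of_real] by simp
    ultimately have "complex_of_real (A0 + A2) * (1 - 2*a) = complex_of_real (A0 + A2) * (1 - 2 * of_real f)" by simp
    moreover have nz: "complex_of_real (A0+A2) \<noteq> 0" using S by (simp only: of_real_eq_0_iff)
    ultimately have "a = of_real f" by simp
    then show ?thesis using b0 e0 unfolding a_def b_def e_def by simp
  qed
  ultimately show ?thesis unfolding f_def by blast
qed


lemma ftc:
  assumes "a \<le> b" "\<And>x. (F has_real_derivative f x) (at x)"
  shows "(f has_integral (F b - F a)) {a..b}"
  by (rule fundamental_theorem_of_calculus[OF assms(1)])
     (simp add: has_real_derivative_iff_has_vector_derivative[symmetric] has_field_derivative_at_within assms(2))

lemma stationary_char2:
  assumes p0: "(p has_integral A0) {-pi..pi}"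
    and p1: "((\<lambda>\<theta>. p \<theta> * cos \<theta>) has_integral A1) {-pi..pi}"
    and p2: "((\<lambda>\<theta>. p \<theta> * sin \<theta>) has_integral 0) {-pi..pi}"
    and p3: "((\<lambda>\<theta>. p \<theta> * (cos \<theta>)^2) has_integral A2) {-pi..pi}"
    and p4: "((\<lambda>\<theta>. p \<theta> * (sin \<theta> * cos \<theta>)) has_integral 0) {-pi..pi}"
    and nn: "\<And>\<theta>. \<theta> \<in> {-pi..pi} \<Longrightarrow> 0 \<le> p \<theta>" and pos: "0 < A0"
  shows "(\<exists>\<rho>. stationary_state p \<rho>) \<and>
      (\<forall>\<rho>. stationary_state p \<rho> \<longrightarrow> \<rho> $ 1 $ 1 = complex_of_real (1/2 + A1/(A0+A2))
         \<and> \<rho> $ 1 $ 2 = 0 \<and> \<rho> $ 2 $ 1 = 0)"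
proof (rule stationary_char[OF p0 p1 p2 p3 p4 pos])
  have c2: "(cos x)^2 \<le> 1" for x :: real using cos_squared_eq[of x] zero_le_power2[of "sin x"] by linarith
  have "0 \<le> A0 - A2"
    by (rule has_integral_nonneg[OF has_integral_diff[OF p0 p3]])
       (use nn c2 in \<open>auto simp: algebra_simps intro!: mult_left_le\<close>)
  then show "A2 \<le> A0" by simp
  show "0 \<le> A2" by (rule has_integral_nonneg[OF p3]) (use nn in auto)
  have q1: "0 \<le> A0 + A2 + 2 * A1"
  proof (rule has_integral_nonneg)
    show "((\<lambda>\<theta>. p \<theta> + p \<theta> * (cos \<theta>)^2 + 2 * (p \<theta> * cos \<theta>)) has_integral (A0 + A2 + 2 * A1)) {-pi..pi}"
      by (intro has_integral_add p0 p3 has_integral_mult_right p1)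
    fix x assume "x \<in> {-pi..pi}"
    have "p x + p x * (cos x)^2 + 2 * (p x * cos x) = p x * (1 + cos x)^2" by (simp add: algebra_simps power2_eq_square)
    then show "0 \<le> p x + p x * (cos x)^2 + 2 * (p x * cos x)" using nn[OF \<open>x \<in> _\<close>] by simp
  qed
  have q2: "0 \<le> A0 + A2 - 2 * A1"
  proof (rule has_integral_nonneg)
    show "((\<lambda>\<theta>. p \<theta> + p \<theta> * (cos \<theta>)^2 - 2 * (p \<theta> * cos \<theta>)) has_integral (A0 + A2 - 2 * A1)) {-pi..pi}"
      by (intro has_integral_add has_integral_diff p0 p3 has_integral_mult_right p1)
    fix x assume "x \<in> {-pi..pi}"
    have "p x + p x * (cos x)^2 - 2 * (p x * cos x) = p x * (1 - cos x)^2" by (simp add: algebra_simps power2_eq_square)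
    then show "0 \<le> p x + p x * (cos x)^2 - 2 * (p x * cos x)" using nn[OF \<open>x \<in> _\<close>] by simp
  qed
  show "\<bar>2 * A1\<bar> \<le> A0 + A2" using q1 q2 by simp
qed

lemma unif_int:
  assumes "0 < t" "t \<le> pi" "((\<lambda>\<theta>. g \<theta> / (2*t)) has_integral I) {-t..t}"
  shows "((\<lambda>\<theta>. uniform_density t \<theta> * g \<theta>) has_integral I) {-pi..pi}"
proof -
  have eq: "(\<lambda>\<theta>. uniform_density t \<theta> * g \<theta>) = (\<lambda>\<theta>. if \<theta> \<in> {-t..t} then g \<theta> / (2*t) else 0)"
    by (auto simp: uniform_density_def)
  show ?thesis unfolding eq using assms by (subst has_integral_restrict) auto
qed

lemma uniform_part:
  assumes t: "0 < t" "t \<le> pi"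
  shows "(\<exists>\<rho>. stationary_state (uniform_density t) \<rho>) \<and>
      (\<forall>\<rho>. stationary_state (uniform_density t) \<rho> \<longrightarrow>
         \<rho> $ 1 $ 1 = complex_of_real (1/2 + 4 * sin t / (6*t + sin (2*t)))
         \<and> \<rho> $ 1 $ 2 = 0 \<and> \<rho> $ 2 $ 1 = 0)"
proof -
  have tt: "-t \<le> t" using t by simp
  have i0: "((\<lambda>\<theta>. 1 / (2*t)) has_integral (t/(2*t) - (-t)/(2*t))) {-t..t}"
    by (rule ftc[OF tt, where F="\<lambda>x. x/(2*t)"]) (use t in \<open>auto intro!: derivative_eq_intros\<close>)
  have i1: "((\<lambda>\<theta>. cos \<theta> / (2*t)) has_integral (sin t/(2*t) - sin (-t)/(2*t))) {-t..t}"
    by (rule ftc[OF tt, where F="\<lambda>x. sin x/(2*t)"]) (use t in \<open>auto intro!: derivative_eq_intros\<close>)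
  have i2: "((\<lambda>\<theta>. sin \<theta> / (2*t)) has_integral (- cos t/(2*t) - (- cos (-t))/(2*t))) {-t..t}"
    by (rule ftc[OF tt, where F="\<lambda>x. - cos x/(2*t)"]) (use t in \<open>auto intro!: derivative_eq_intros\<close>)
  have cd: "cos (x*2) = 2*(cos x)^2 - 1" for x :: real using cos_double_cos[of x] by (simp add: mult.commute)
  have i3: "((\<lambda>\<theta>. (cos \<theta>)^2 / (2*t)) has_integral ((t/2 + sin (2*t)/4)/(2*t) - ((-t)/2 + sin (2*(-t))/4)/(2*t))) {-t..t}"
    by (rule ftc[OF tt, where F="\<lambda>x. (x/2 + sin (2*x)/4)/(2*t)"])
       (use t in \<open>auto intro!: derivative_eq_intros simp: cd field_simps\<close>)
  have i4: "((\<lambda>\<theta>. (sin \<theta> * cos \<theta>) / (2*t)) has_integral ((sin t)^2/2/(2*t) - (sin (-t))^2/2/(2*t))) {-t..t}"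
    by (rule ftc[OF tt, where F="\<lambda>x. (sin x)^2/2/(2*t)"])
       (use t in \<open>auto intro!: derivative_eq_intros simp: field_simps\<close>)
  have p0: "(uniform_density t has_integral 1) {-pi..pi}"
    using unif_int[OF t i0] t by simp
  have p1: "((\<lambda>\<theta>. uniform_density t \<theta> * cos \<theta>) has_integral (sin t / t)) {-pi..pi}"
    using unif_int[OF t i1] t by simp
  have p2: "((\<lambda>\<theta>. uniform_density t \<theta> * sin \<theta>) has_integral 0) {-pi..pi}"
    using unif_int[OF t i2] t by simp
  have p3: "((\<lambda>\<theta>. uniform_density t \<theta> * (cos \<theta>)^2) has_integral ((t + sin (2*t)/2)/(2*t))) {-pi..pi}"
  proof -
    have "(t/2 + sin (2*t)/4)/(2*t) - ((-t)/2 + sin (2*(-t))/4)/(2*t) = (t + sin (2*t)/2)/(2*t)"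
      using t by (simp add: field_simps)
    then show ?thesis using unif_int[OF t i3] by simp
  qed
  have p4: "((\<lambda>\<theta>. uniform_density t \<theta> * (sin \<theta> * cos \<theta>)) has_integral 0) {-pi..pi}"
    using unif_int[OF t i4] t by simp
  have nn: "0 \<le> uniform_density t \<theta>" for \<theta> using t by (simp add: uniform_density_def)
  note R = stationary_char2[OF p0 p1 p2 p3 p4 nn]
  have s2: "\<bar>sin (2*t)\<bar> \<le> 2*t" using abs_sin_x_le_abs_x[of "2*t"] t by simp
  have "1/2 + (sin t / t) / (1 + (t + sin (2*t)/2)/(2*t)) = 1/2 + 4 * sin t / (6*t + sin (2*t))"
  proof -
    have a: "6*t + sin (2*t) > 0" using s2 t by (simp add: abs_le_iff)
    have b: "2*t + (t + sin (2*t)/2) > 0" using s2 t by (simp add: abs_le_iff)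
    show ?thesis using a b t by (simp add: field_simps)
  qed
  then show ?thesis using R by simp
qed


lemma unif_asymp: "(\<lambda>t::real. (1/2 + 4 * sin t / (6*t + sin (2*t))) - (1 - t^4/80)) \<in> O[at_right 0](\<lambda>t. t^6)"
  by real_asymp


definition W :: "nat \<Rightarrow> real" where "W n = integral {-pi..pi} (\<lambda>\<theta>. cos \<theta> ^ n)"

lemma W_has: "((\<lambda>\<theta>. cos \<theta> ^ n) has_integral W n) {-pi..pi}"
  unfolding W_def by (intro integrable_integral integrable_continuous_interval continuous_intros)

lemma W0: "W 0 = 2*pi"
proof -
  have "((\<lambda>\<theta>. cos \<theta> ^ 0) has_integral (pi - (-pi))) {-pi..pi}"
    by (rule ftc[where F="\<lambda>x. x"]) (auto intro!: derivative_eq_intros)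
  then show ?thesis using has_integral_unique[OF W_has[of 0]] by simp
qed

lemma W1: "W 1 = 0"
proof -
  have "((\<lambda>\<theta>. cos \<theta> ^ 1) has_integral (sin pi - sin (-pi))) {-pi..pi}"
    by (rule ftc[where F="\<lambda>x. sin x"]) (auto intro!: derivative_eq_intros)
  then show ?thesis using has_integral_unique[OF W_has[of 1]] by simp
qed

lemma W_rec: "real (n+2) * W (n+2) = real (n+1) * W n"
proof -
  have d: "((\<lambda>\<theta>. real (n+2) * cos \<theta> ^ (n+2) - real (n+1) * cos \<theta> ^ n) has_integral
      (cos pi ^ (n+1) * sin pi - cos (-pi) ^ (n+1) * sin (-pi))) {-pi..pi}"
  proof (rule ftc[where F="\<lambda>x. cos x ^ (n+1) * sin x"])
    fix x :: real
    have "(real (n+1) * cos x ^ n * - sin x) * sin x + cos x ^ (n+1) * cos x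
        = real (n+2) * cos x ^ (n+2) - real (n+1) * cos x ^ n"
    proof -
      have s: "sin x * sin x = 1 - cos x * cos x" using sin_cos_squared_add3[of x] by linarith
      have "(real (n+1) * cos x ^ n * - sin x) * sin x = - real (n+1) * cos x ^ n * (sin x * sin x)"
        by (simp add: algebra_simps)
      also have "\<dots> = - real (n+1) * cos x ^ n * (1 - cos x * cos x)" by (simp only: s)
      finally have h: "(real (n+1) * cos x ^ n * - sin x) * sin x = - real (n+1) * cos x ^ n * (1 - cos x * cos x)" .
      have c1: "cos x ^ (n+2) = cos x ^ n * (cos x * cos x)" "cos x ^ (n+1) * cos x = cos x ^ n * (cos x * cos x)"
        by (simp_all add: power_add power2_eq_square)
      have r2: "real (n+2) = real (n+1) + 1" by simp
      show ?thesis unfolding h c1 r2 by (simp add: algebra_simps)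
    qed
    moreover have "((\<lambda>x. cos x ^ (n+1) * sin x) has_real_derivative
        ((real (n+1) * cos x ^ n * - sin x) * sin x + cos x ^ (n+1) * cos x)) (at x)"
      using DERIV_mult[OF DERIV_power[OF DERIV_cos[of x], of "n+1"] DERIV_sin[of x]]
      by (simp add: algebra_simps)
    ultimately show "((\<lambda>x. cos x ^ (n+1) * sin x) has_real_derivative
        (real (n+2) * cos x ^ (n+2) - real (n+1) * cos x ^ n)) (at x)" by simp
  qed simp
  have "((\<lambda>\<theta>. real (n+2) * cos \<theta> ^ (n+2) - real (n+1) * cos \<theta> ^ n) has_integral
      (real (n+2) * W (n+2) - real (n+1) * W n)) {-pi..pi}"
    by (intro has_integral_diff has_integral_mult_right W_has)
  from has_integral_unique[OF this d] show ?thesis by simp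
qed

lemma W_odd: "W (2*j+1) = 0"
proof (induction j)
  case 0 then show ?case using W1 by simp
next
  case (Suc j)
  have "real (2*j+1+2) * W (2*j+1+2) = real (2*j+1+1) * W (2*j+1)" by (rule W_rec)
  then show ?case using Suc by simp
qed

lemma W_aux:
  fixes A B F p m :: real assumes "A > 0" "B > 0" "m + 1 \<noteq> 0" "2*m+2 \<noteq> 0"
  shows "(2*m+1) * (2*p*F/(B*A^2))/(2*m+2) = 2*p*((2*m+2)*(2*m+1)*F)/(4*B*((m+1)*A)^2)"
proof -
  have d1: "B*A^2*(2*m+2) \<noteq> 0" and d2: "4*B*((m+1)*A)^2 \<noteq> 0" using assms by auto
  have "(2*m+1) * (2*p*F/(B*A^2))/(2*m+2) = ((2*m+1)*(2*p*F))/(B*A^2*(2*m+2))" by simp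
  also have "\<dots> = 2*p*((2*m+2)*(2*m+1)*F)/(4*B*((m+1)*A)^2)"
    by (subst frac_eq_eq[OF d1 d2]) (simp add: power2_eq_square algebra_simps)
  finally show ?thesis .
qed

lemma W_even: "W (2*j) = 2*pi * fact (2*j) / (4^j * (fact j)^2)"
proof (induction j)
  case 0 then show ?case using W0 by simp
next
  case (Suc j)
  have r: "real (2*j+2) * W (2*j+2) = real (2*j+1) * W (2*j)" using W_rec[of "2*j"] by simp
  have f1: "fact (2*j+2) = real (2*j+2) * real (2*j+1) * fact (2*j)"
    by (simp add: fact_Suc algebra_simps)
  have f2: "(fact (Suc j) :: real) = real (j+1) * fact j" by (simp add: fact_Suc)
  have p1: "(fact j::real) > 0" "(4::real)^j > 0" by simp_all
  have "W (2*Suc j) = real (2*j+1) * W (2*j) / real (2*j+2)"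
    using r by (simp add: field_simps)
  also have "\<dots> = 2*pi * fact (2*Suc j) / (4^Suc j * (fact (Suc j))^2)"
  proof -
    have e: "2*Suc j = 2*j+2" by simp
    show ?thesis unfolding e f1 f2 Suc
      using W_aux[OF p1, of "real j" pi "fact (2*j)"] by (simp add: algebra_simps)
  qed
  finally show ?case .
qed


lemma exp_cos_series:
  fixes k :: real and i :: nat
  shows "(\<lambda>n. \<Sum>j<n. k^j / fact j * W (j+i)) \<longlonglongrightarrow> integral {-pi..pi} (\<lambda>\<theta>. exp (k * cos \<theta>) * cos \<theta> ^ i)"
proof -
  define f where "f n \<theta> = (k * cos \<theta>)^n / fact n * cos \<theta> ^ i" for n \<theta>
  have bnd: "norm (f n \<theta>) \<le> \<bar>k\<bar>^n / fact n" if "\<theta> \<in> {-pi..pi}" for n \<theta>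
  proof -
    have "norm (f n \<theta>) = \<bar>k\<bar>^n / fact n * (\<bar>cos \<theta>\<bar>^n * \<bar>cos \<theta>\<bar>^i)"
      by (simp add: f_def abs_mult power_abs power_mult_distrib)
    also have "\<dots> \<le> \<bar>k\<bar>^n / fact n * 1"
      by (intro mult_left_mono mult_le_one power_le_one) auto
    finally show ?thesis by simp
  qed
  have sM: "summable (\<lambda>n. \<bar>k\<bar>^n / fact n)"
    using summable_exp[of "\<bar>k\<bar>"] by (simp add: field_simps)
  have u: "uniform_limit {-pi..pi} (\<lambda>n \<theta>. \<Sum>j<n. f j \<theta>) (\<lambda>\<theta>. suminf (\<lambda>j. f j \<theta>)) sequentially"
    by (rule Weierstrass_m_test[OF bnd sM])
  have lim: "(\<lambda>\<theta>. suminf (\<lambda>j. f j \<theta>)) = (\<lambda>\<theta>. exp (k * cos \<theta>) * cos \<theta> ^ i)"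
  proof
    fix \<theta>
    have "(\<lambda>n. (k * cos \<theta>)^n /\<^sub>R fact n) sums exp (k * cos \<theta>)" by (rule exp_converges)
    then have "(\<lambda>n. (k * cos \<theta>)^n / fact n) sums exp (k * cos \<theta>)" by (simp add: field_simps)
    then have "(\<lambda>n. f n \<theta>) sums (exp (k * cos \<theta>) * cos \<theta> ^ i)" unfolding f_def by (rule sums_mult2)
    then show "suminf (\<lambda>j. f j \<theta>) = exp (k * cos \<theta>) * cos \<theta> ^ i" by (rule sums_unique[symmetric])
  qed
  have cont: "continuous_on {-pi..pi} (\<lambda>\<theta>. \<Sum>j<n. f j \<theta>)" for n
    unfolding f_def by (intro continuous_intros) auto
  obtain I J where I: "\<And>n. ((\<lambda>\<theta>. \<Sum>j<n. f j \<theta>) has_integral I n) {-pi..pi}"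
    and J: "((\<lambda>\<theta>. suminf (\<lambda>j. f j \<theta>)) has_integral J) {-pi..pi}" and IJ: "I \<longlonglongrightarrow> J"
    using uniform_limit_integral[OF u cont] sequentially_bot by blast
  have In: "I n = (\<Sum>j<n. k^j / fact j * W (j+i))" for n
  proof -
    have "((\<lambda>\<theta>. \<Sum>j<n. f j \<theta>) has_integral (\<Sum>j<n. k^j / fact j * W (j+i))) {-pi..pi}"
    proof (rule has_integral_sum)
      fix j
      have "f j = (\<lambda>\<theta>. k^j / fact j * cos \<theta> ^ (j+i))"
        by (rule ext) (simp add: f_def power_mult_distrib power_add)
      then show "(f j has_integral k^j / fact j * W (j+i)) {-pi..pi}"
        using has_integral_mult_right[OF W_has[of "j+i"], of "k^j / fact j"] by simp
    qed simp
    from has_integral_unique[OF I[of n] this] show ?thesis .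
  qed
  have "J = integral {-pi..pi} (\<lambda>\<theta>. exp (k * cos \<theta>) * cos \<theta> ^ i)"
    using J unfolding lim by (simp add: integral_unique)
  moreover have "I = (\<lambda>n. \<Sum>j<n. k^j / fact j * W (j+i))" using In by (rule ext)
  ultimately show ?thesis using IJ by simp
qed

lemma sum_even_odd: "(\<Sum>j<2*m. g j) = (\<Sum>j<m. g (2*j) + g (2*j+1))" for g :: "nat \<Rightarrow> real"
  by (induction m) (simp_all add: algebra_simps)

lemma bessel_from_limit:
  assumes lim: "(\<lambda>n. \<Sum>j<n. g j) \<longlonglongrightarrow> L"
    and terms: "\<And>j. g (2*j) + g (2*j+1) = 2*pi * b j"
  shows "b sums (L / (2*pi))"
proof -
  have sm: "strict_mono (\<lambda>m::nat. 2*m)" by (rule strict_monoI) simp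
  have "((\<lambda>n. \<Sum>j<n. g j) \<circ> (\<lambda>m. 2*m)) \<longlonglongrightarrow> L" by (rule LIMSEQ_subseq_LIMSEQ[OF lim sm])
  moreover have "(\<lambda>m. \<Sum>j<2*m. g j) = (\<lambda>m. \<Sum>j<m. 2*pi * b j)"
    by (rule ext) (simp only: sum_even_odd terms)
  ultimately have "(\<lambda>m. \<Sum>j<m. 2*pi * b j) \<longlonglongrightarrow> L" by (simp add: o_def)
  then have "(\<lambda>j. 2*pi * b j) sums L" by (simp add: sums_def)
  then have "(\<lambda>j. 2*pi * b j / (2*pi)) sums (L / (2*pi))" by (rule sums_divide)
  then show "b sums (L / (2*pi))" by simp
qed

lemma aux0:
  fixes a F A B p :: real assumes "F \<noteq> 0" "A \<noteq> 0" "B \<noteq> 0"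
  shows "a/F * (2*p*F/(B*A^2)) = 2*p*(a/B/(A*A))"
  using assms by (simp add: field_simps power2_eq_square)

lemma aux1:
  fixes a G A B p m :: real assumes "G \<noteq> 0" "A \<noteq> 0" "B \<noteq> 0" "m + 1 \<noteq> 0"
  shows "a/G * (2*p*((2*m+2)*G)/(4*B*((m+1)*A)^2)) = 2*p*(a/(2*B)/(A*((m+1)*A)))"
proof -
  have e: "2*m+2 = 2*(m+1)" by simp
  have d1: "G * (4*B*((m+1)*A)^2) \<noteq> 0" and d2: "A*((m+1)*A)*(2*B) \<noteq> 0" using assms by auto
  have "a/G * (2*p*((2*m+2)*G)/(4*B*((m+1)*A)^2)) = (a * (2*p*((2*m+2)*G))) / (G * (4*B*((m+1)*A)^2))"
    by simp
  also have "\<dots> = (2*p*a) / (A*((m+1)*A)*(2*B))"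
    by (subst frac_eq_eq[OF d1 d2]) (simp add: power2_eq_square algebra_simps)
  also have "\<dots> = 2*p*(a/(2*B)/(A*((m+1)*A)))" by (simp add: field_simps)
  finally show ?thesis .
qed

lemma bessel0_int: "bessel_I 0 k = integral {-pi..pi} (\<lambda>\<theta>. exp (k * cos \<theta>)) / (2*pi)"
proof -
  have "bessel_I 0 k = suminf (\<lambda>j. (k/2) ^ (2*j+0) / (fact j * fact (j+0)))" by (simp add: bessel_I_def)
  also have "\<dots> = integral {-pi..pi} (\<lambda>\<theta>. exp (k * cos \<theta>) * cos \<theta> ^ 0) / (2*pi)"
  proof (rule sums_unique[symmetric], rule bessel_from_limit[OF exp_cos_series[of k 0]])
    fix j
    have p: "(2::real)^(2*j) = 4^j" by (simp add: power_mult)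
    have f: "(fact (2*j)::real) \<noteq> 0" "(fact j :: real) \<noteq> 0" "(4::real)^j \<noteq> 0" by simp_all
    show "k ^ (2*j) / fact (2*j) * W (2*j+0) + k ^ (2*j+1) / fact (2*j+1) * W (2*j+1+0)
        = 2*pi * ((k/2) ^ (2*j+0) / (fact j * fact (j+0)))"
    proof -
      have w1: "W (2*j+1+0) = 0" using W_odd[of j] by simp
      have w0: "W (2*j+0) = 2*pi * fact (2*j) / (4^j * (fact j)^2)" using W_even[of j] by simp
      have kk: "(k/2) ^ (2*j+0) = k^(2*j) / 4^j" by (simp add: power_divide p)
      show ?thesis unfolding w0 w1 kk using aux0[OF f(1) f(2) f(3), of "k^(2*j)" pi] by simp
    qed
  qed
  finally show ?thesis by simp
qed

lemma bessel1_sums: "(\<lambda>j. (k/2) ^ (2*j+1) / (fact j * fact (j+1))) sums (integral {-pi..pi} (\<lambda>\<theta>. exp (k * cos \<theta>) * cos \<theta> ^ 1) / (2*pi))"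
  proof (rule bessel_from_limit[OF exp_cos_series[of k 1]])
    fix j
    have p: "(2::real)^(2*j+1) = 2 * 4^j" by (simp add: power_mult)
    have f: "(fact (2*j+1)::real) \<noteq> 0" "(fact j :: real) \<noteq> 0" "(fact (j+1) :: real) \<noteq> 0" "(4::real)^j \<noteq> 0" by simp_all
    have w: "W (2*j+1+1) = 2*pi * (real (2*j+2) * fact (2*j+1)) / (4 * 4^j * (real (j+1) * fact j)^2)"
    proof -
      have "W (2*j+1+1) = W (2*Suc j)" by simp
      also have "\<dots> = 2*pi * fact (2*Suc j) / (4^Suc j * (fact (Suc j))^2)" by (rule W_even)
      also have "fact (2*Suc j) = (real (2*j+2) * fact (2*j+1) :: real)" by (simp add: fact_Suc)
      also have "(fact (Suc j) :: real) = real (j+1) * fact j" by (simp add: fact_Suc)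
      finally show ?thesis by simp
    qed
    have fj: "(fact (j+1) :: real) = real (j+1) * fact j" by (simp add: fact_Suc)
    show "k ^ (2*j) / fact (2*j) * W (2*j+1) + k ^ (2*j+1) / fact (2*j+1) * W (2*j+1+1)
        = 2*pi * ((k/2) ^ (2*j+1) / (fact j * fact (j+1)))"
    proof -
      have kk: "(k/2) ^ (2*j+1) = k^(2*j+1) / (2 * 4^j)" by (simp only: power_divide p)
      have w': "W (2*j+1+1) = 2*pi * ((2 * real j + 2) * fact (2*j+1)) / (4 * 4^j * ((real j + 1) * fact j)^2)"
        unfolding w by (simp add: add.commute)
      have m: "real j + 1 \<noteq> 0" by linarith
      show ?thesis unfolding W_odd w' fj kk using aux1[OF f(1) f(2) f(4) m, of "k^(2*j+1)" pi] by simp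
    qed
  qed

lemma bessel1_int: "bessel_I 1 k = integral {-pi..pi} (\<lambda>\<theta>. exp (k * cos \<theta>) * cos \<theta>) / (2*pi)"
  using sums_unique[OF bessel1_sums[of k]] by (simp add: bessel_I_def)

lemma bessel1_pos: "0 < k \<Longrightarrow> 0 < bessel_I 1 k"
  unfolding bessel_I_def
  by (rule suminf_pos[OF sums_summable[OF bessel1_sums[of k]]]) simp


lemma cont_int: "continuous_on {-pi..pi} f \<Longrightarrow> (f has_integral integral {-pi..pi} f) {-pi..pi}"
  for f :: "real \<Rightarrow> real"
  by (intro integrable_integral integrable_continuous_interval)

lemma vm_moments:
  fixes k :: real assumes k: "0 < k"
  defines "J0 \<equiv> integral {-pi..pi} (\<lambda>\<theta>. exp (k * cos \<theta>))"
    and "J1 \<equiv> integral {-pi..pi} (\<lambda>\<theta>. exp (k * cos \<theta>) * cos \<theta>)"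
  shows "((\<lambda>\<theta>. exp (k * cos \<theta>)) has_integral J0) {-pi..pi}"
    and "((\<lambda>\<theta>. exp (k * cos \<theta>) * cos \<theta>) has_integral J1) {-pi..pi}"
    and "((\<lambda>\<theta>. exp (k * cos \<theta>) * sin \<theta>) has_integral 0) {-pi..pi}"
    and "((\<lambda>\<theta>. exp (k * cos \<theta>) * (cos \<theta>)^2) has_integral (J0 - J1/k)) {-pi..pi}"
    and "((\<lambda>\<theta>. exp (k * cos \<theta>) * (sin \<theta> * cos \<theta>)) has_integral 0) {-pi..pi}"
    and "0 < J0"
proof -
  show h0: "((\<lambda>\<theta>. exp (k * cos \<theta>)) has_integral J0) {-pi..pi}"
    unfolding J0_def by (intro cont_int continuous_intros)
  show h1: "((\<lambda>\<theta>. exp (k * cos \<theta>) * cos \<theta>) has_integral J1) {-pi..pi}"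
    unfolding J1_def by (intro cont_int continuous_intros)
  have "((\<lambda>\<theta>. exp (k * cos \<theta>) * sin \<theta>) has_integral
      (- exp (k * cos pi) / k - (- exp (k * cos (-pi)) / k))) {-pi..pi}"
    by (rule ftc[where F="\<lambda>x. - exp (k * cos x) / k"]) (use k in \<open>auto intro!: derivative_eq_intros\<close>)
  then show "((\<lambda>\<theta>. exp (k * cos \<theta>) * sin \<theta>) has_integral 0) {-pi..pi}" by simp
  have "((\<lambda>\<theta>. exp (k * cos \<theta>) * (sin \<theta> * cos \<theta>)) has_integral
      ((- cos pi * exp (k * cos pi) / k + exp (k * cos pi) / k^2)
      - (- cos (-pi) * exp (k * cos (-pi)) / k + exp (k * cos (-pi)) / k^2))) {-pi..pi}"
    by (rule ftc[where F="\<lambda>x. - cos x * exp (k * cos x) / k + exp (k * cos x) / k^2"])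
       (use k in \<open>auto intro!: derivative_eq_intros simp: field_simps power2_eq_square\<close>)
  then show "((\<lambda>\<theta>. exp (k * cos \<theta>) * (sin \<theta> * cos \<theta>)) has_integral 0) {-pi..pi}" by simp
  define J2 where "J2 = integral {-pi..pi} (\<lambda>\<theta>. exp (k * cos \<theta>) * (cos \<theta>)^2)"
  have h2: "((\<lambda>\<theta>. exp (k * cos \<theta>) * (cos \<theta>)^2) has_integral J2) {-pi..pi}"
    unfolding J2_def by (intro cont_int continuous_intros)
  have d: "((\<lambda>\<theta>. exp (k * cos \<theta>) * cos \<theta> - k * exp (k * cos \<theta>) + k * (exp (k * cos \<theta>) * (cos \<theta>)^2))
      has_integral (sin pi * exp (k * cos pi) - sin (-pi) * exp (k * cos (-pi)))) {-pi..pi}"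
  proof (rule ftc[where F="\<lambda>x. sin x * exp (k * cos x)"])
    fix x :: real
    have s: "sin x * sin x = 1 - cos x * cos x" using sin_cos_squared_add3[of x] by linarith
    have "cos x * exp (k * cos x) + sin x * (exp (k * cos x) * (k * - sin x))
       = exp (k * cos x) * cos x - k * exp (k * cos x) * (sin x * sin x)" by (simp add: algebra_simps)
    also have "\<dots> = exp (k * cos x) * cos x - k * exp (k * cos x) + k * (exp (k * cos x) * (cos x)^2)"
      unfolding s by (simp add: algebra_simps power2_eq_square)
    finally have e: "cos x * exp (k * cos x) + sin x * (exp (k * cos x) * (k * - sin x)) =
      exp (k * cos x) * cos x - k * exp (k * cos x) + k * (exp (k * cos x) * (cos x)^2)" .
    have "((\<lambda>x. sin x * exp (k * cos x)) has_real_derivative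
       (cos x * exp (k * cos x) + sin x * (exp (k * cos x) * (k * - sin x)))) (at x)"
      by (auto intro!: derivative_eq_intros)
    then show "((\<lambda>x. sin x * exp (k * cos x)) has_real_derivative
       (exp (k * cos x) * cos x - k * exp (k * cos x) + k * (exp (k * cos x) * (cos x)^2))) (at x)"
      unfolding e .
  qed simp
  have "((\<lambda>\<theta>. exp (k * cos \<theta>) * cos \<theta> - k * exp (k * cos \<theta>) + k * (exp (k * cos \<theta>) * (cos \<theta>)^2))
      has_integral (J1 - k * J0 + k * J2)) {-pi..pi}"
    by (intro has_integral_add has_integral_diff has_integral_mult_right h0 h1 h2)
  from has_integral_unique[OF this d] have "J1 - k * J0 + k * J2 = 0" by simp
  then have "J2 = J0 - J1/k" using k by (simp add: field_simps)
  then show "((\<lambda>\<theta>. exp (k * cos \<theta>) * (cos \<theta>)^2) has_integral (J0 - J1/k)) {-pi..pi}"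
    using h2 by simp
  have c: "((\<lambda>\<theta>. exp (-k)) has_integral (pi * exp (-k) - (-pi) * exp (-k))) {-pi..pi}"
    by (rule ftc[where F="\<lambda>x. x * exp (-k)"]) (auto intro!: derivative_eq_intros)
  have "pi * exp (-k) - (-pi) * exp (-k) \<le> J0"
  proof (rule has_integral_le[OF c h0])
    fix x :: real
    have "k * (-1) \<le> k * cos x" by (rule mult_left_mono) (use k in auto)
    then show "exp (-k) \<le> exp (k * cos x)" by simp
  qed
  moreover have "0 < pi * exp (-k) - (-pi) * exp (-k)" by simp
  ultimately show "0 < J0" by linarith
qed

lemma vm_part:
  assumes s: "0 < s"
  shows "(\<exists>\<rho>. stationary_state (von_mises_density s) \<rho>) \<and>
      (\<forall>\<rho>. stationary_state (von_mises_density s) \<rho> \<longrightarrow>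
         \<rho> $ 1 $ 1 = complex_of_real (1/2 + 1 / (2 * bessel_I 0 (1/s^2) / bessel_I 1 (1/s^2) - s^2))
         \<and> \<rho> $ 1 $ 2 = 0 \<and> \<rho> $ 2 $ 1 = 0)"
proof -
  define k where "k = 1/s^2"
  have k: "0 < k" using s by (simp add: k_def)
  define J0 where "J0 = integral {-pi..pi} (\<lambda>\<theta>. exp (k * cos \<theta>))"
  define J1 where "J1 = integral {-pi..pi} (\<lambda>\<theta>. exp (k * cos \<theta>) * cos \<theta>)"
  note M = vm_moments[OF k, folded J0_def J1_def]
  have B0: "bessel_I 0 k = J0 / (2*pi)" unfolding J0_def by (rule bessel0_int)
  have B1: "bessel_I 1 k = J1 / (2*pi)" unfolding J1_def by (rule bessel1_int)
  have J1p: "0 < J1" using bessel1_pos[OF k] B1 by (simp add: zero_less_divide_iff)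
  have J0p: "0 < J0" by (rule M(6))
  have vm: "von_mises_density s = (\<lambda>\<theta>. exp (k * cos \<theta>) / J0)"
  proof (rule ext)
    fix \<theta>
    have cs: "cos \<theta> / s^2 = k * cos \<theta>" by (simp add: k_def)
    show "von_mises_density s \<theta> = exp (k * cos \<theta>) / J0"
      unfolding von_mises_density_def cs B0[unfolded k_def] by simp
  qed
  have p0: "(von_mises_density s has_integral 1) {-pi..pi}"
    unfolding vm using has_integral_divide[OF M(1), of J0] J0p by simp
  have p1: "((\<lambda>\<theta>. von_mises_density s \<theta> * cos \<theta>) has_integral (J1/J0)) {-pi..pi}"
    unfolding vm using has_integral_divide[OF M(2), of J0] by simp
  have p2: "((\<lambda>\<theta>. von_mises_density s \<theta> * sin \<theta>) has_integral 0) {-pi..pi}"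
    unfolding vm using has_integral_divide[OF M(3), of J0] by simp
  have p3: "((\<lambda>\<theta>. von_mises_density s \<theta> * (cos \<theta>)^2) has_integral ((J0 - J1/k)/J0)) {-pi..pi}"
    unfolding vm using has_integral_divide[OF M(4), of J0] by simp
  have p4: "((\<lambda>\<theta>. von_mises_density s \<theta> * (sin \<theta> * cos \<theta>)) has_integral 0) {-pi..pi}"
    unfolding vm using has_integral_divide[OF M(5), of J0] by simp
  have nn: "0 \<le> von_mises_density s \<theta>" for \<theta> unfolding vm using J0p by simp
  note R = stationary_char2[OF p0 p1 p2 p3 p4 nn]
  have "1/2 + (J1/J0) / (1 + (J0 - J1/k)/J0) = 1/2 + 1 / (2 * bessel_I 0 (1/s^2) / bessel_I 1 (1/s^2) - s^2)"
  proof -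
    have ss: "s^2 = 1/k" using s by (simp add: k_def)
    have d: "2*J0 - J1/k \<noteq> 0"
    proof -
      have "J1/k = J0 - (J0 - J1/k)" by simp
      moreover have "(J0 - J1/k) \<ge> 0"
        by (rule has_integral_nonneg[OF M(4)]) simp
      ultimately show ?thesis using J0p by linarith
    qed
    have e1: "(J1/J0) / (1 + (J0 - J1/k)/J0) = J1 / (2*J0 - J1/k)"
    proof -
      have "(2*J0 - J1/k)/J0 = (J0 + (J0 - J1/k))/J0" by simp
      also have "\<dots> = J0/J0 + (J0 - J1/k)/J0" by (rule add_divide_distrib)
      also have "\<dots> = 1 + (J0 - J1/k)/J0" using J0p by simp
      finally have "1 + (J0 - J1/k)/J0 = (2*J0 - J1/k)/J0" by simp
      then show ?thesis using J0p by simp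
    qed
    have e2: "2 * (J0/(2*pi)) / (J1/(2*pi)) = 2*J0/J1" by simp
    have e3: "2*J0/J1 - 1/k = (2*J0 - J1/k)/J1" using J1p by (simp add: diff_divide_distrib)
    have bb0: "bessel_I 0 (1/s^2) = J0/(2*pi)" using B0 by (simp add: k_def)
    have bb1: "bessel_I 1 (1/s^2) = J1/(2*pi)" using B1 by (simp add: k_def)
    show ?thesis unfolding bb0 bb1 unfolding ss e2 e3 e1 by simp
  qed
  then show ?thesis using R by simp
qed


lemma u_upper: "1 - cos x \<le> x^2 / 2" for x :: real
proof -
  have "1 - cos x = 2 * (sin (x/2))^2" using cos_double_sin[of "x/2"] by simp
  also have "\<dots> \<le> 2 * (x/2)^2"
  proof -
    have "\<bar>sin (x/2)\<bar> \<le> \<bar>x/2\<bar>" by (rule abs_sin_x_le_abs_x)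
    then have "(sin (x/2))^2 \<le> (x/2)^2" by (metis abs_le_square_iff)
    then show ?thesis by simp
  qed
  also have "\<dots> = x^2/2" by (simp add: power2_eq_square)
  finally show ?thesis .
qed

lemma sin_cubic: "0 \<le> y \<Longrightarrow> y - y^3/6 \<le> sin y" for y :: real
proof -
  assume y: "0 \<le> y"
  have "(\<lambda>x. sin x - x + x^3/6) 0 \<le> (\<lambda>x. sin x - x + x^3/6) y"
  proof (rule DERIV_nonneg_imp_nondecreasing[OF y])
    fix x :: real
    have "((\<lambda>x. sin x - x + x^3/6) has_real_derivative (cos x - 1 + x^2/2)) (at x)"
      by (auto intro!: derivative_eq_intros simp: power2_eq_square)
    moreover have "0 \<le> cos x - 1 + x^2/2" using u_upper[of x] by simp
    ultimately show "\<exists>d. ((\<lambda>x. sin x - x + x^3/6) has_real_derivative d) (at x) \<and> 0 \<le> d" by blast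
  qed
  then show ?thesis by simp
qed

lemma u_lower: "\<bar>x\<bar> \<le> pi \<Longrightarrow> x^2 / 8 \<le> 1 - cos x" for x :: real
proof -
  assume x: "\<bar>x\<bar> \<le> pi"
  define y where "y = \<bar>x\<bar>/2"
  have y0: "0 \<le> y" and y1: "y \<le> pi/2" using x by (simp_all add: y_def)
  have "y^2 \<le> 3"
  proof -
    have "y^2 \<le> (pi/2)^2" using y0 y1 by (intro power_mono) auto
    also have "\<dots> \<le> (1.6::real)^2"
    proof -
      have "pi \<le> 3.2" using pi_approx(2) by simp
      then show ?thesis by (intro power_mono) auto
    qed
    also have "\<dots> \<le> 3" by (simp add: power2_eq_square)
    finally show ?thesis .
  qed
  have "y/2 \<le> sin y"
  proof -
    have "y * y^2 \<le> y * 3" using \<open>y^2 \<le> 3\<close> y0 by (intro mult_left_mono) auto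
    moreover have "y^3 = y * y^2" by (simp add: power2_eq_square power3_eq_cube)
    ultimately have "y/2 \<le> y - y^3/6" by simp
    then show ?thesis using sin_cubic[OF y0] by linarith
  qed
  then have "(y/2)^2 \<le> (sin y)^2" using y0 by (intro power_mono) auto
  moreover have "(sin y)^2 = (sin (x/2))^2"
  proof (cases "0 \<le> x")
    case True then show ?thesis by (simp add: y_def)
  next
    case False then have "y = - (x/2)" by (simp add: y_def)
    then show ?thesis by simp
  qed
  moreover have "1 - cos x = 2 * (sin (x/2))^2" using cos_double_sin[of "x/2"] by simp
  moreover have "(y/2)^2 = x^2/16" by (simp add: y_def power2_eq_square power_divide abs_mult_self_eq)
  ultimately show ?thesis by linarith
qed

lemma cube_exp: "0 \<le> x \<Longrightarrow> x^3 * exp (-x) \<le> 216 * exp (-x/2)" for x :: real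
proof -
  assume x: "0 \<le> x"
  have "x/6 \<le> exp (x/6)" using exp_ge_add_one_self[of "x/6"] by linarith
  then have "(x/6)^3 \<le> (exp (x/6))^3" using x by (intro power_mono) auto
  also have "(exp (x/6))^3 = exp (x/2)" by (simp add: exp_of_nat_mult[symmetric])
  finally have "x^3 \<le> 216 * exp (x/2)" by (simp add: power_divide)
  then have "x^3 * exp (-x) \<le> 216 * exp (x/2) * exp (-x)" by (intro mult_right_mono) auto
  also have "\<dots> = 216 * exp (-x/2)" by (simp add: mult.assoc exp_add[symmetric])
  finally show ?thesis .
qed


definition mm :: "real \<Rightarrow> nat \<Rightarrow> real" where
  "mm k j = integral {-pi..pi} (\<lambda>\<theta>. (1 - cos \<theta>)^j * exp (-k * (1 - cos \<theta>)))"

lemma mm_has: "((\<lambda>\<theta>. (1 - cos \<theta>)^j * exp (-k * (1 - cos \<theta>))) has_integral mm k j) {-pi..pi}"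
  unfolding mm_def by (intro cont_int continuous_intros)

lemma mm_R1: "mm k 0 - (1 + 2*k) * mm k 1 + k * mm k 2 = 0"
proof -
  have d: "((\<lambda>\<theta>. (1 - cos \<theta>)^0 * exp (-k * (1 - cos \<theta>)) - (1 + 2*k) * ((1 - cos \<theta>)^1 * exp (-k * (1 - cos \<theta>)))
       + k * ((1 - cos \<theta>)^2 * exp (-k * (1 - cos \<theta>))))
      has_integral (sin pi * exp (-k * (1 - cos pi)) - sin (-pi) * exp (-k * (1 - cos (-pi))))) {-pi..pi}"
  proof (rule ftc[where F="\<lambda>x. sin x * exp (-k * (1 - cos x))"])
    fix x :: real
    have s: "sin x * sin x = 1 - cos x * cos x" using sin_cos_squared_add3[of x] by linarith
    have "cos x * exp (-k * (1 - cos x)) + sin x * (exp (-k * (1 - cos x)) * (- k * sin x))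
       = exp (-k * (1 - cos x)) * (cos x - k * (sin x * sin x))" by (simp add: algebra_simps)
    also have "\<dots> = (1 - cos x)^0 * exp (-k * (1 - cos x)) - (1 + 2*k) * ((1 - cos x)^1 * exp (-k * (1 - cos x)))
       + k * ((1 - cos x)^2 * exp (-k * (1 - cos x)))"
      unfolding s by (simp add: algebra_simps power2_eq_square)
    finally have e: "cos x * exp (-k * (1 - cos x)) + sin x * (exp (-k * (1 - cos x)) * (- k * sin x)) =
       (1 - cos x)^0 * exp (-k * (1 - cos x)) - (1 + 2*k) * ((1 - cos x)^1 * exp (-k * (1 - cos x)))
       + k * ((1 - cos x)^2 * exp (-k * (1 - cos x)))" .
    have "((\<lambda>x. sin x * exp (-k * (1 - cos x))) has_real_derivative
       (cos x * exp (-k * (1 - cos x)) + sin x * (exp (-k * (1 - cos x)) * (- k * sin x)))) (at x)"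
      by (auto intro!: derivative_eq_intros simp: algebra_simps)
    then show "((\<lambda>x. sin x * exp (-k * (1 - cos x))) has_real_derivative
       ((1 - cos x)^0 * exp (-k * (1 - cos x)) - (1 + 2*k) * ((1 - cos x)^1 * exp (-k * (1 - cos x)))
       + k * ((1 - cos x)^2 * exp (-k * (1 - cos x))))) (at x)"
      unfolding e .
  qed simp
  have "((\<lambda>\<theta>. (1 - cos \<theta>)^0 * exp (-k * (1 - cos \<theta>)) - (1 + 2*k) * ((1 - cos \<theta>)^1 * exp (-k * (1 - cos \<theta>)))
       + k * ((1 - cos \<theta>)^2 * exp (-k * (1 - cos \<theta>))))
      has_integral (mm k 0 - (1 + 2*k) * mm k 1 + k * mm k 2)) {-pi..pi}"
    by (intro has_integral_add has_integral_diff has_integral_mult_right mm_has)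
  from has_integral_unique[OF this d] show ?thesis by simp
qed

lemma mm_R2: "3 * mm k 1 - (2 + 2*k) * mm k 2 + k * mm k 3 = 0"
proof -
  have d: "((\<lambda>\<theta>. 3 * ((1 - cos \<theta>)^1 * exp (-k * (1 - cos \<theta>))) - (2 + 2*k) * ((1 - cos \<theta>)^2 * exp (-k * (1 - cos \<theta>)))
       + k * ((1 - cos \<theta>)^3 * exp (-k * (1 - cos \<theta>))))
      has_integral (sin pi * (1 - cos pi) * exp (-k * (1 - cos pi)) - sin (-pi) * (1 - cos (-pi)) * exp (-k * (1 - cos (-pi))))) {-pi..pi}"
  proof (rule ftc[where F="\<lambda>x. sin x * (1 - cos x) * exp (-k * (1 - cos x))"])
    fix x :: real
    have s: "sin x * sin x = 1 - cos x * cos x" using sin_cos_squared_add3[of x] by linarith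
    have "(cos x * (1 - cos x) + sin x * sin x) * exp (-k * (1 - cos x)) + sin x * (1 - cos x) * (exp (-k * (1 - cos x)) * (- k * sin x))
       = exp (-k * (1 - cos x)) * (cos x * (1 - cos x) + (sin x * sin x) - k * (1 - cos x) * (sin x * sin x))"
      by (simp add: algebra_simps)
    also have "\<dots> = 3 * ((1 - cos x)^1 * exp (-k * (1 - cos x))) - (2 + 2*k) * ((1 - cos x)^2 * exp (-k * (1 - cos x)))
       + k * ((1 - cos x)^3 * exp (-k * (1 - cos x)))"
      unfolding s by (simp add: algebra_simps power2_eq_square power3_eq_cube)
    finally have e: "(cos x * (1 - cos x) + sin x * sin x) * exp (-k * (1 - cos x)) + sin x * (1 - cos x) * (exp (-k * (1 - cos x)) * (- k * sin x)) =
       3 * ((1 - cos x)^1 * exp (-k * (1 - cos x))) - (2 + 2*k) * ((1 - cos x)^2 * exp (-k * (1 - cos x)))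
       + k * ((1 - cos x)^3 * exp (-k * (1 - cos x)))" .
    have "((\<lambda>x. sin x * (1 - cos x) * exp (-k * (1 - cos x))) has_real_derivative
       ((cos x * (1 - cos x) + sin x * sin x) * exp (-k * (1 - cos x)) + sin x * (1 - cos x) * (exp (-k * (1 - cos x)) * (- k * sin x)))) (at x)"
      by (auto intro!: derivative_eq_intros simp: algebra_simps)
    then show "((\<lambda>x. sin x * (1 - cos x) * exp (-k * (1 - cos x))) has_real_derivative
       (3 * ((1 - cos x)^1 * exp (-k * (1 - cos x))) - (2 + 2*k) * ((1 - cos x)^2 * exp (-k * (1 - cos x)))
       + k * ((1 - cos x)^3 * exp (-k * (1 - cos x))))) (at x)"
      unfolding e .
  qed simp
  have "((\<lambda>\<theta>. 3 * ((1 - cos \<theta>)^1 * exp (-k * (1 - cos \<theta>))) - (2 + 2*k) * ((1 - cos \<theta>)^2 * exp (-k * (1 - cos \<theta>)))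
       + k * ((1 - cos \<theta>)^3 * exp (-k * (1 - cos \<theta>))))
      has_integral (3 * mm k 1 - (2 + 2*k) * mm k 2 + k * mm k 3)) {-pi..pi}"
    by (intro has_integral_add has_integral_diff has_integral_mult_right mm_has)
  from has_integral_unique[OF this d] show ?thesis by simp
qed

lemma J_mm:
  "integral {-pi..pi} (\<lambda>\<theta>. exp (k * cos \<theta>)) = exp k * mm k 0"
  "integral {-pi..pi} (\<lambda>\<theta>. exp (k * cos \<theta>) * cos \<theta>) = exp k * (mm k 0 - mm k 1)"
proof -
  have e: "exp (k * cos \<theta>) = exp k * exp (-k * (1 - cos \<theta>))" for \<theta>
    by (simp add: exp_add[symmetric] algebra_simps)
  have "((\<lambda>\<theta>. exp (k * cos \<theta>)) has_integral exp k * mm k 0) {-pi..pi}"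
    using has_integral_mult_right[OF mm_has[of 0 k], of "exp k"] by (simp add: e)
  then show "integral {-pi..pi} (\<lambda>\<theta>. exp (k * cos \<theta>)) = exp k * mm k 0" by (rule integral_unique)
  have "((\<lambda>\<theta>. exp (k * cos \<theta>) * cos \<theta>) has_integral exp k * (mm k 0 - mm k 1)) {-pi..pi}"
    using has_integral_mult_right[OF has_integral_diff[OF mm_has[of 0 k] mm_has[of 1 k]], of "exp k"]
    by (simp add: e algebra_simps)
  then show "integral {-pi..pi} (\<lambda>\<theta>. exp (k * cos \<theta>) * cos \<theta>) = exp k * (mm k 0 - mm k 1)" by (rule integral_unique)
qed

lemma mm_nonneg: "0 \<le> mm k j"
  by (rule has_integral_nonneg[OF mm_has]) (auto intro!: mult_nonneg_nonneg)

lemma mm0_lower: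
  assumes s: "0 < s" "s \<le> 1"
  shows "s \<le> mm (1/s^2) 0"
proof -
  define k where "k = 1/s^2"
  have sp: "s \<le> pi" using s pi_gt3 by linarith
  have c: "((\<lambda>x. 1/2) has_integral (s/2 - (-s)/2)) {-s..s}"
    by (rule ftc[where F="\<lambda>x. x/2"]) (use s in \<open>auto intro!: derivative_eq_intros\<close>)
  have g: "((\<lambda>x. if x \<in> {-s..s} then 1/2 else 0) has_integral s) {-pi..pi}"
    using c sp by (subst has_integral_restrict) auto
  have "s \<le> mm k 0"
  proof (rule has_integral_le[OF g mm_has])
    fix x :: real assume x: "x \<in> {-pi..pi}"
    show "(if x \<in> {-s..s} then 1/2 else 0) \<le> (1 - cos x)^0 * exp (-k * (1 - cos x))"
    proof (cases "x \<in> {-s..s}")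
      case True
      then have "\<bar>x\<bar> \<le> s" by auto
      then have "x^2 \<le> s^2" by (metis abs_le_square_iff abs_of_pos s(1))
      then have "k * (1 - cos x) \<le> k * (s^2/2)"
        using u_upper[of x] s by (intro mult_left_mono) (auto simp: k_def)
      also have "\<dots> = 1/2" using s by (simp add: k_def)
      finally have "-(1/2) \<le> -k * (1 - cos x)" by simp
      then have "exp (-(1/2)) \<le> exp (-k * (1 - cos x))" by simp
      moreover have "1/2 \<le> exp (-(1/2::real))" using exp_ge_add_one_self[of "-(1/2)"] by simp
      ultimately have "1/2 \<le> exp (-k * (1 - cos x))" by linarith
      then show ?thesis using True by simp
    qed auto
  qed
  then show ?thesis by (simp add: k_def)
qed

lemma mm3_upper:
  assumes s: "0 < s"
  shows "mm (1/s^2) 3 \<le> 864 * pi * s^7"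
proof -
  define k where "k = 1/s^2"
  have k: "0 < k" using s by (simp add: k_def)
  define a where "a = 4 * s"
  have a: "0 < a" using s by (simp add: a_def)
  have i: "((\<lambda>x. 1 / (1 + (x/a)^2)) has_integral (a * arctan (pi/a) - a * arctan (-pi/a))) {-pi..pi}"
  proof (rule ftc[where F="\<lambda>x. a * arctan (x/a)"])
    fix x :: real
    show "((\<lambda>x. a * arctan (x/a)) has_real_derivative 1 / (1 + (x/a)^2)) (at x)"
      using a by (auto intro!: derivative_eq_intros simp: divide_inverse)
  qed simp
  have i2: "((\<lambda>x. 216 * s^6 * (1 / (1 + (x/a)^2))) has_integral (216 * s^6 * (a * arctan (pi/a) - a * arctan (-pi/a)))) {-pi..pi}"
    by (rule has_integral_mult_right[OF i])
  have le: "mm k 3 \<le> 216 * s^6 * (a * arctan (pi/a) - a * arctan (-pi/a))"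
  proof (rule has_integral_le[OF mm_has i2])
    fix x :: real assume x: "x \<in> {-pi..pi}"
    define u where "u = 1 - cos x"
    have u0: "0 \<le> u" by (simp add: u_def)
    have ul: "x^2/8 \<le> u" using u_lower[of x] x by (auto simp: u_def)
    have e1: "exp (-(k*u)/2) \<le> exp (-((x/a)^2))"
    proof -
      have "(x/a)^2 = k * (x^2/8) / 2" using s by (simp add: a_def k_def power_divide field_simps)
      also have "\<dots> \<le> k * u / 2" using ul k by (intro divide_right_mono mult_left_mono) auto
      finally show ?thesis by simp
    qed
    have e2: "exp (-((x/a)^2)) \<le> 1 / (1 + (x/a)^2)"
    proof -
      have "1 + (x/a)^2 \<le> exp ((x/a)^2)" by (rule exp_ge_add_one_self)
      then have "1 / exp ((x/a)^2) \<le> 1 / (1 + (x/a)^2)"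
        by (intro divide_left_mono) (auto intro!: mult_pos_pos add_pos_nonneg)
      then show ?thesis by (simp add: exp_minus divide_inverse)
    qed
    have "u^3 * exp (-k * u) = s^6 * ((k*u)^3 * exp (-(k*u)))"
      using s by (simp add: k_def power_mult_distrib field_simps)
    also have "\<dots> \<le> s^6 * (216 * exp (-(k*u)/2))"
      using cube_exp[of "k*u"] k u0 by (intro mult_left_mono) auto
    also have "\<dots> \<le> s^6 * (216 * (1 / (1 + (x/a)^2)))"
      using order_trans[OF e1 e2] by (intro mult_left_mono) auto
    finally show "(1 - cos x)^3 * exp (-k * (1 - cos x)) \<le> 216 * s^6 * (1 / (1 + (x/a)^2))"
      by (simp add: u_def mult_ac)
  qed
  have "a * arctan (pi/a) - a * arctan (-pi/a) \<le> a * pi"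
  proof -
    have "arctan (pi/a) < pi/2" "- (pi/2) < arctan (-pi/a)" by (rule arctan_ubound, rule arctan_lbound)
    then have "arctan (pi/a) - arctan (-pi/a) \<le> pi" by linarith
    then have "a * (arctan (pi/a) - arctan (-pi/a)) \<le> a * pi" using a by (intro mult_left_mono) auto
    then show ?thesis by (simp add: algebra_simps)
  qed
  then have "216 * s^6 * (a * arctan (pi/a) - a * arctan (-pi/a)) \<le> 216 * s^6 * (a * pi)"
    using s by (intro mult_left_mono) auto
  with le have "mm k 3 \<le> 216 * s^6 * (a * pi)" by linarith
  moreover have "216 * s^6 * (a * pi) = 864 * pi * s^7" by (simp add: a_def eval_nat_numeral)
  ultimately show ?thesis by (simp add: k_def)
qed


lemma key_alg:
  fixes a b c t :: real
  assumes a: "0 < a" and c: "0 \<le> c" and t: "0 < t"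
    and hb: "b * (2*t^2 + 3*t + 4) = (2*t^2 + 2*t) * a + c" and ne: "0 < a - b"
  shows "1/2 + 1 / (2*a/(a-b) - t) - (1 - 3/16*t^2)
     = (a*(6*t^3 + 9*t^4) + c*(3*t^3 - 8*t - 16)) / (16*(a*(8 + 2*t + 3*t^2) + t*c))"
proof -
  define P where "P = 2*t^2 + 3*t + 4"
  define Q where "Q = a*(4 + t) - c"
  define Dn where "Dn = a*(8 + 2*t + 3*t^2) + t*c"
  have P: "0 < P" using t by (simp add: P_def add_pos_pos)
  have e1: "(a - b) * P = Q" using hb unfolding P_def Q_def by (simp add: algebra_simps)
  have Q: "0 < Q" using e1 P ne by (metis mult_pos_pos)
  have Dn: "0 < Dn" using a c t unfolding Dn_def by (intro add_pos_nonneg mult_pos_pos) auto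
  have ab: "a - b = Q / P" using e1 P by (simp add: field_simps)
  have e2: "2*a/(a-b) - t = Dn / Q"
  proof -
    have "2*a/(a-b) - t = 2*a*P/Q - t" unfolding ab using P Q by simp
    also have "\<dots> = (2*a*P - t*Q)/Q" using Q by (simp add: diff_divide_distrib)
    also have "2*a*P - t*Q = Dn" unfolding P_def Q_def Dn_def by (simp add: algebra_simps power2_eq_square)
    finally show ?thesis .
  qed
  have "1/2 + 1 / (2*a/(a-b) - t) - (1 - 3/16*t^2) = Q/Dn - 1/2 + 3/16*t^2"
    unfolding e2 using Q Dn by simp
  also have "\<dots> = (16*Q - 8*Dn + 3*t^2*Dn) / (16*Dn)"
    using Dn by (simp add: field_simps)
  also have "16*Q - 8*Dn + 3*t^2*Dn = a*(6*t^3 + 9*t^4) + c*(3*t^3 - 8*t - 16)"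
    unfolding Q_def Dn_def by (simp add: algebra_simps power2_eq_square power3_eq_cube eval_nat_numeral)
  finally show ?thesis unfolding Dn_def .
qed

lemma bound_alg:
  fixes a c t K :: real
  assumes a: "0 < a" and c: "0 \<le> c" and t: "0 < t" "t \<le> 1" and K: "0 \<le> K" and cK: "c \<le> K * t^3 * a"
  shows "\<bar>(a*(6*t^3 + 9*t^4) + c*(3*t^3 - 8*t - 16)) / (16*(a*(8 + 2*t + 3*t^2) + t*c))\<bar>
     \<le> (15 + 27*K)/128 * t^3"
proof -
  define N where "N = a*(6*t^3 + 9*t^4) + c*(3*t^3 - 8*t - 16)"
  define Dn where "Dn = a*(8 + 2*t + 3*t^2) + t*c"
  have t4: "t^4 \<le> t^3" using t by (simp add: power_decreasing eval_nat_numeral)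
  have t3: "t^3 \<le> 1" using t by (simp add: power_le_one)
  have t1: "t \<le> 1" using t by simp
  have "\<bar>N\<bar> \<le> a*(6*t^3 + 9*t^4) + c*(16 + 8*t + 3*t^3)"
    unfolding N_def using a c t by (auto simp: abs_le_iff algebra_simps intro!: mult_nonneg_nonneg add_nonneg_nonneg)
  also have "\<dots> \<le> a*(15*t^3) + c*27"
  proof (intro add_mono mult_left_mono)
    show "6*t^3 + 9*t^4 \<le> 15*t^3" using t4 by simp
    show "16 + 8*t + 3*t^3 \<le> 27" using t1 t3 by simp
  qed (use a c in auto)
  also have "\<dots> \<le> a*(15*t^3) + (K*t^3*a)*27" using cK by simp
  also have "\<dots> = (15 + 27*K) * t^3 * a" by (simp add: algebra_simps)
  finally have Nb: "\<bar>N\<bar> \<le> (15 + 27*K) * t^3 * a" .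
  have Db: "128 * a \<le> 16 * Dn" unfolding Dn_def using a c t
    by (simp add: algebra_simps add_nonneg_nonneg)
  have "\<bar>N / (16*Dn)\<bar> = \<bar>N\<bar> / (16*Dn)" using Db a by simp
  also have "\<dots> \<le> ((15 + 27*K) * t^3 * a) / (128 * a)"
    using Nb Db a by (intro frac_le) auto
  also have "\<dots> = (15 + 27*K)/128 * t^3" using a by simp
  finally show ?thesis unfolding N_def Dn_def .
qed

lemma hb_lemma:
  fixes k a b m2 c :: real assumes k: "0 < k"
    and R1: "a - (1 + 2*k) * b + k * m2 = 0" and R2: "3 * b - (2 + 2*k) * m2 + k * c = 0"
  shows "b * (2*(1/k)^2 + 3*(1/k) + 4) = (2*(1/k)^2 + 2*(1/k)) * a + c"
proof -
  have km: "k * m2 = (1 + 2*k) * b - a" using R1 by simp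
  have "k * (3 * b - (2 + 2*k) * m2 + k * c) = 0" using R2 by simp
  then have "3*k*b - (2 + 2*k) * (k * m2) + k^2 * c = 0" by (simp add: algebra_simps power2_eq_square)
  then have "3*k*b - (2 + 2*k) * ((1 + 2*k) * b - a) + k^2 * c = 0" unfolding km .
  then have E: "b * (2 + 3*k + 4*k^2) = (2 + 2*k) * a + k^2 * c" by (simp add: algebra_simps power2_eq_square)
  have "b * (2*(1/k)^2 + 3*(1/k) + 4) = b * (2 + 3*k + 4*k^2) / k^2"
    using k by (simp add: field_simps power2_eq_square)
  also have "\<dots> = ((2 + 2*k) * a + k^2 * c) / k^2" unfolding E ..
  also have "\<dots> = (2*(1/k)^2 + 2*(1/k)) * a + c" using k by (simp add: field_simps power2_eq_square)
  finally show ?thesis .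
qed

lemma vm_asymp:
  "(\<lambda>s. (1/2 + 1 / (2 * bessel_I 0 (1/s^2) / bessel_I 1 (1/s^2) - s^2)) - (1 - 3/16 * s^4))
        \<in> O[at_right 0](\<lambda>s. s^6)"
proof (rule bigoI)
  define K :: real where "K = 864 * pi"
  have ev: "\<forall>\<^sub>F s in at_right (0::real). 0 < s \<and> s < 1"
    unfolding eventually_at_right_field by (rule exI[of _ 1]) auto
  show "\<forall>\<^sub>F s in at_right 0. norm ((1/2 + 1 / (2 * bessel_I 0 (1/s^2) / bessel_I 1 (1/s^2) - s^2)) - (1 - 3/16 * s^4))
      \<le> (15 + 27*K)/128 * norm (s^6)"
    using ev
  proof eventually_elim
    case (elim s)
    then have s: "0 < s" "s \<le> 1" by auto
    define k where "k = 1/s^2"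
    have k: "0 < k" using s by (simp add: k_def)
    define a where "a = mm k 0"
    define b where "b = mm k 1"
    define c where "c = mm k 3"
    define t where "t = s^2"
    have t: "0 < t" "t \<le> 1" using s by (simp_all add: t_def power_le_one)
    have tk: "t = 1/k" by (simp add: t_def k_def)
    have a: "s \<le> a" unfolding a_def k_def by (rule mm0_lower[OF s])
    have a0: "0 < a" using a s by linarith
    have c0: "0 \<le> c" unfolding c_def by (rule mm_nonneg)
    have cK: "c \<le> K * t^3 * a"
    proof -
      have "c \<le> 864 * pi * s^7" unfolding c_def k_def by (rule mm3_upper[OF s(1)])
      also have "\<dots> = K * t^3 * s" by (simp add: K_def t_def eval_nat_numeral)
      also have "\<dots> \<le> K * t^3 * a" using a t by (intro mult_left_mono) (auto simp: K_def)
      finally show ?thesis .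
    qed
    have hb: "b * (2*t^2 + 3*t + 4) = (2*t^2 + 2*t) * a + c"
      unfolding tk a_def b_def c_def by (rule hb_lemma[OF k mm_R1 mm_R2])
    have I0: "bessel_I 0 (1/s^2) = exp k * a / (2*pi)"
      using bessel0_int[of k] J_mm(1)[of k] by (simp add: k_def a_def)
    have I1: "bessel_I 1 (1/s^2) = exp k * (a - b) / (2*pi)"
      using bessel1_int[of k] J_mm(2)[of k] by (simp add: k_def a_def b_def)
    have ne: "0 < a - b"
    proof -
      have "0 < bessel_I 1 (1/s^2)" using bessel1_pos[OF k] by (simp add: k_def)
      then show ?thesis unfolding I1 by (simp add: zero_less_mult_iff zero_less_divide_iff)
    qed
    have rat: "2 * bessel_I 0 (1/s^2) / bessel_I 1 (1/s^2) = 2*a/(a-b)"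
      unfolding I0 I1 using ne by simp
    have eq: "(1/2 + 1 / (2 * bessel_I 0 (1/s^2) / bessel_I 1 (1/s^2) - s^2)) - (1 - 3/16 * s^4)
      = (a*(6*t^3 + 9*t^4) + c*(3*t^3 - 8*t - 16)) / (16*(a*(8 + 2*t + 3*t^2) + t*c))"
    proof -
      have "s^4 = t^2" by (simp add: t_def power_mult[symmetric])
      then show ?thesis unfolding rat using key_alg[OF a0 c0 t(1) hb ne] by (simp add: t_def)
    qed
    have "norm (s^6) = t^3" using s by (simp add: t_def power_mult[symmetric])
    then show ?case unfolding eq real_norm_def
      using bound_alg[OF a0 c0 t _ cK] t by (simp add: K_def)
  qed
qed


theorem mainTheorem10:
  shows
  "(\<forall>t. 0 < t \<and> t \<le> pi \<longrightarrow>
      (\<exists>\<rho>. stationary_state (uniform_density t) \<rho>) \<and>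
      (\<forall>\<rho>. stationary_state (uniform_density t) \<rho> \<longrightarrow>
         \<rho> $ 1 $ 1 = complex_of_real (1/2 + 4 * sin t / (6*t + sin (2*t)))
         \<and> \<rho> $ 1 $ 2 = 0 \<and> \<rho> $ 2 $ 1 = 0))
   \<and> (\<lambda>t::real. (1/2 + 4 * sin t / (6*t + sin (2*t))) - (1 - t^4/80)) \<in> O[at_right 0](\<lambda>t. t^6)
   \<and> (\<forall>s. 0 < s \<longrightarrow>
      (\<exists>\<rho>. stationary_state (von_mises_density s) \<rho>) \<and>
      (\<forall>\<rho>. stationary_state (von_mises_density s) \<rho> \<longrightarrow>
         \<rho> $ 1 $ 1 = complex_of_real (1/2 + 1 / (2 * bessel_I 0 (1/s^2) / bessel_I 1 (1/s^2) - s^2))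
         \<and> \<rho> $ 1 $ 2 = 0 \<and> \<rho> $ 2 $ 1 = 0))
   \<and> (\<lambda>s. (1/2 + 1 / (2 * bessel_I 0 (1/s^2) / bessel_I 1 (1/s^2) - s^2)) - (1 - 3/16 * s^4))
        \<in> O[at_right 0](\<lambda>s. s^6)"
    using uniform_part unif_asymp vm_part vm_asymp by blast

end
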